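(* Let $M,N,d$ be positive integers. For $i=1,\dots,M$, $j=1,\dots,N$ let $x_{ij}\in\mathbb{R}^d$, $y_{ij}\in\{+1,-1\}$, with the points drawn from a continuous (absolutely continuous) distribution and the dataset satisfying: each $C_i=\{w:\ y_{ij}x_{ij}^Tw\ge1,\ j=1,\dots,N\}$ is nonempty and $\bar C=\bigcap_{i=1}^MC_i\neq\emptyset$. Let $\alpha^k=1-\frac{1}{k+1}$. For $\lambda>0$ define Modified Local-GD iterates by $w_0^0=0$ and, for $k\ge0$, $$w_i^{k+1}=\arg\min_{w}\sum_{j=1}^N\exp(-y_{ij}x_{ij}^Tw)+\frac\lambda2\|w-w_0^k\|^2,\qquad w_0^{k+1}=(1-\alpha^k)w_0^0+\alpha^k\Big(\frac1M\sum_{i=1}^Mw_i^{k+1}\Big).$$ Let $\hat w=\arg\min_{w\in\bar C}\|w\|$ (the hard-margin SVM solution on all data, to which the centralized model trained by gradient descent on the total exponential loss from $0$ converges in direction). Then, for almost all such datasets, $$\lim_{K\to\infty}\lim_{\lambda\to0}\frac{w_0^K(\lambda)}{\|w_0^K(\lambda)\|}=\frac{\hat w}{\|\hat w\|}.$$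
   Context: Modified Local-GD differs from Local-GD only in the aggregation step, which mixes the initial point with the average of the local models. Each local problem is solved exactly (unique minimizer) in every round. *)

theory Defs
  imports "HOL-Analysis.Analysis"
begin

text \<open>A dataset consists of points X $ i $ j in R^d (client i, sample j) and labels y i j.
  Clients are indexed by the finite type 'm (M = CARD('m)), samples per client by 'n
  (N = CARD('n)), the dimension is d = CARD('d).\<close>

definition local_loss ::
  "('m::finite \<Rightarrow> 'n::finite \<Rightarrow> real) \<Rightarrow> real^'d^'n^'m \<Rightarrow> 'm \<Rightarrow> real \<Rightarrow> real^'d \<Rightarrow> real^'d \<Rightarrow> real" where
  "local_loss y X i lam c w =
     (\<Sum>j\<in>UNIV. exp (- (y i j * ((X $ i $ j) \<bullet> w)))) + lam / 2 * (norm (w - c))^2"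

definition local_argmin ::
  "('m::finite \<Rightarrow> 'n::finite \<Rightarrow> real) \<Rightarrow> real^'d^'n^'m \<Rightarrow> 'm \<Rightarrow> real \<Rightarrow> real^'d \<Rightarrow> real^'d" where
  "local_argmin y X i lam c = (THE w. \<forall>v. local_loss y X i lam c w \<le> local_loss y X i lam c v)"

definition alpha :: "nat \<Rightarrow> real" where
  "alpha k = 1 - 1 / (real k + 1)"

fun mlgd :: "('m::finite \<Rightarrow> 'n::finite \<Rightarrow> real) \<Rightarrow> real^'d^'n^'m \<Rightarrow> real \<Rightarrow> nat \<Rightarrow> real^'d" where
  "mlgd y X lam 0 = 0"
| "mlgd y X lam (Suc k) =
     (1 - alpha k) *\<^sub>R mlgd y X lam 0
     + alpha k *\<^sub>R ((1 / real CARD('m)) *\<^sub>R (\<Sum>i\<in>UNIV. local_argmin y X i lam (mlgd y X lam k)))"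

definition local_set :: "('m::finite \<Rightarrow> 'n::finite \<Rightarrow> real) \<Rightarrow> real^'d^'n^'m \<Rightarrow> 'm \<Rightarrow> (real^'d) set" where
  "local_set y X i = {w. \<forall>j. y i j * ((X $ i $ j) \<bullet> w) \<ge> 1}"

definition total_set :: "('m::finite \<Rightarrow> 'n::finite \<Rightarrow> real) \<Rightarrow> real^'d^'n^'m \<Rightarrow> (real^'d) set" where
  "total_set y X = (\<Inter>i. local_set y X i)"

definition svm :: "('m::finite \<Rightarrow> 'n::finite \<Rightarrow> real) \<Rightarrow> real^'d^'n^'m \<Rightarrow> real^'d" where
  "svm y X = (THE w. w \<in> total_set y X \<and> (\<forall>v\<in>total_set y X. norm w \<le> norm v))"

end

theory Submission
  imports Defs "HOL-Real_Asymp.Real_Asymp"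
begin
lemma local_set_closed: "closed (local_set y X i)"
  unfolding local_set_def
  by (intro closed_Collect_all closed_Collect_le continuous_intros)

lemma local_set_convex:
  fixes y :: "'m::finite \<Rightarrow> 'n::finite \<Rightarrow> real" and X :: "real^'d^'n^'m"
  shows "convex (local_set y X i)"
  unfolding local_set_def convex_def
proof (clarify)
  fix x z and u v :: real and j
  assume x: "\<forall>j. 1 \<le> y i j * (X $ i $ j \<bullet> x)" and z: "\<forall>j. 1 \<le> y i j * (X $ i $ j \<bullet> z)"
    and uv: "0 \<le> u" "0 \<le> v" "u + v = 1"
  have "y i j * (X $ i $ j \<bullet> (u *\<^sub>R x + v *\<^sub>R z)) = u * (y i j * (X $ i $ j \<bullet> x)) + v * (y i j * (X $ i $ j \<bullet> z))"
    by (simp add: inner_add_right algebra_simps)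
  also have "\<dots> \<ge> u * 1 + v * 1"
    using x z uv by (intro add_mono mult_left_mono) auto
  finally show "1 \<le> y i j * (X $ i $ j \<bullet> (u *\<^sub>R x + v *\<^sub>R z))" using uv by simp
qed

lemma total_set_closed: "closed (total_set y X)"
  unfolding total_set_def using local_set_closed by blast

lemma total_set_convex: "convex (total_set y X)"
  unfolding total_set_def using local_set_convex by (blast intro: convex_INT)

lemma local_loss_cont: "continuous_on S (local_loss y X i lam c)"
  unfolding local_loss_def by (intro continuous_intros)

lemma local_loss_ge: "lam \<ge> 0 \<Longrightarrow> local_loss y X i lam c w \<ge> lam / 2 * (norm (w - c))^2"
  unfolding local_loss_def by (simp add: sum_nonneg)

lemma local_loss_exists:
  assumes lam: "lam > 0"
  shows "\<exists>w. \<forall>v. local_loss y X i lam c w \<le> local_loss y X i lam c v"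
proof -
  let ?F = "local_loss y X i lam c"
  define r where "r = sqrt (2 * ?F c / lam)"
  have Fc: "?F c \<ge> 0" unfolding local_loss_def by (simp add: sum_nonneg)
  have "c \<in> cball c r" unfolding r_def using Fc lam by simp
  then have ne: "cball c r \<noteq> {}" by blast
  obtain x where x: "x \<in> cball c r" "\<forall>z\<in>cball c r. ?F x \<le> ?F z"
    using continuous_attains_inf[OF compact_cball ne local_loss_cont] by blast
  have "?F x \<le> ?F v" for v
  proof (cases "v \<in> cball c r")
    case True then show ?thesis using x by blast
  next
    case False
    then have "norm (v - c) > r" by (simp add: dist_norm norm_minus_commute)
    then have "(norm (v - c))^2 > r^2" using Fc lam unfolding r_def
      by (intro power_strict_mono) auto
    then have "lam / 2 * (norm (v - c))^2 > lam / 2 * r^2" using lam by simp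
    also have "lam / 2 * r^2 = ?F c" unfolding r_def using Fc lam by simp
    moreover have "?F v \<ge> lam / 2 * (norm (v - c))^2" by (rule local_loss_ge) (use lam in simp)
    ultimately have "?F c < ?F v" by linarith
    moreover have "?F x \<le> ?F c" using x(2) \<open>c \<in> cball c r\<close> by blast
    ultimately show ?thesis by linarith
  qed
  then show ?thesis by blast
qed

lemma exp_mid: fixes a b :: real shows "exp ((a + b) / 2) \<le> (exp a + exp b) / 2"
proof -
  have "exp ((a+b)/2) = exp (a/2) * exp (b/2)" by (simp add: exp_add[symmetric] add_divide_distrib)
  moreover have "exp a = (exp (a/2))^2" "exp b = (exp (b/2))^2"
    by (simp_all add: power2_eq_square exp_add[symmetric])
  moreover have "2 * (exp (a/2) * exp (b/2)) \<le> (exp (a/2))^2 + (exp (b/2))^2"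
    using sum_squares_bound[of "exp (a/2)" "exp (b/2)"] by (simp add: mult.assoc)
  ultimately show ?thesis by simp
qed

lemma local_loss_mid:
  assumes lam: "lam > 0" and ne: "w1 \<noteq> w2"
  shows "local_loss y X i lam c ((1/2) *\<^sub>R (w1 + w2)) < (local_loss y X i lam c w1 + local_loss y X i lam c w2) / 2"
proof -
  have e: "exp (- (y i j * (X $ i $ j \<bullet> ((1/2) *\<^sub>R (w1 + w2))))) \<le>
     (exp (- (y i j * (X $ i $ j \<bullet> w1))) + exp (- (y i j * (X $ i $ j \<bullet> w2)))) / 2" for j
  proof -
    have eq: "- (y i j * (X $ i $ j \<bullet> ((1/2) *\<^sub>R (w1 + w2)))) = ((- (y i j * (X $ i $ j \<bullet> w1))) + (- (y i j * (X $ i $ j \<bullet> w2)))) / 2"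
      by (simp add: inner_add_right algebra_simps)
    show ?thesis unfolding eq by (rule exp_mid)
  qed
  have s: "(\<Sum>j\<in>UNIV. exp (- (y i j * (X $ i $ j \<bullet> ((1/2) *\<^sub>R (w1 + w2)))))) \<le>
     ((\<Sum>j\<in>UNIV. exp (- (y i j * (X $ i $ j \<bullet> w1)))) + (\<Sum>j\<in>UNIV. exp (- (y i j * (X $ i $ j \<bullet> w2))))) / 2"
  proof -
    have "(\<Sum>j\<in>UNIV. exp (- (y i j * (X $ i $ j \<bullet> ((1/2) *\<^sub>R (w1 + w2)))))) \<le>
      (\<Sum>j\<in>UNIV. (exp (- (y i j * (X $ i $ j \<bullet> w1))) + exp (- (y i j * (X $ i $ j \<bullet> w2)))) / 2)"
      by (intro sum_mono e)
    also have "\<dots> = ((\<Sum>j\<in>UNIV. exp (- (y i j * (X $ i $ j \<bullet> w1)))) + (\<Sum>j\<in>UNIV. exp (- (y i j * (X $ i $ j \<bullet> w2))))) / 2"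
      by (simp only: sum_divide_distrib[symmetric] sum.distrib)
    finally show ?thesis .
  qed
  have par: "(norm ((1/2) *\<^sub>R (w1 + w2) - c))^2 = ((norm (w1 - c))^2 + (norm (w2 - c))^2) / 2 - (norm (w1 - w2))^2 / 4"
    unfolding power2_norm_eq_inner
    by (simp add: inner_diff_left inner_diff_right inner_add_left inner_add_right inner_commute field_simps)
  have "(norm (w1 - w2))^2 > 0" using ne by simp
  then have "(norm ((1/2) *\<^sub>R (w1 + w2) - c))^2 < ((norm (w1 - c))^2 + (norm (w2 - c))^2) / 2"
    unfolding par by linarith
  then have "lam / 2 * (norm ((1/2) *\<^sub>R (w1 + w2) - c))^2 < lam / 2 * (((norm (w1 - c))^2 + (norm (w2 - c))^2) / 2)"
    using lam by (intro mult_strict_left_mono) auto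
  also have "\<dots> = (lam / 2 * (norm (w1 - c))^2 + lam / 2 * (norm (w2 - c))^2) / 2"
    by (simp add: field_simps)
  finally have q: "lam / 2 * (norm ((1/2) *\<^sub>R (w1 + w2) - c))^2 < (lam / 2 * (norm (w1 - c))^2 + lam / 2 * (norm (w2 - c))^2) / 2" .
  show ?thesis unfolding local_loss_def using add_le_less_mono[OF s q] by (simp add: field_simps)
qed

lemma local_argmin_min:
  assumes lam: "lam > 0"
  shows "local_loss y X i lam c (local_argmin y X i lam c) \<le> local_loss y X i lam c v"
proof -
  let ?F = "local_loss y X i lam c"
  obtain w where w: "\<forall>v. ?F w \<le> ?F v" using local_loss_exists[OF lam] by blast
  have uniq: "w' = w" if "\<forall>v. ?F w' \<le> ?F v" for w'
  proof (rule ccontr)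
    assume "w' \<noteq> w"
    then have "?F ((1/2) *\<^sub>R (w' + w)) < (?F w' + ?F w) / 2" using local_loss_mid[OF lam] by blast
    moreover have "?F w' \<le> ?F w" "?F w \<le> ?F w'" using w that by auto
    ultimately have "?F ((1/2) *\<^sub>R (w' + w)) < ?F w" by simp
    then show False using w by (meson not_le)
  qed
  have "\<forall>v. ?F (local_argmin y X i lam c) \<le> ?F v"
    unfolding local_argmin_def by (rule theI[where P="\<lambda>w. \<forall>v. ?F w \<le> ?F v", OF w uniq])
  then show ?thesis by blast
qed

lemma det:
  fixes z a b p :: "real^'d" and y :: "'m::finite \<Rightarrow> 'n::finite \<Rightarrow> real" and X :: "real^'d^'n^'m"
  assumes pC: "p \<in> local_set y X i" and proj: "\<forall>q\<in>local_set y X i. inner (a - p) (q - p) \<le> 0"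
    and zm: "\<forall>j. y i j * (X$i$j \<bullet> z) \<ge> 1 - e" and e: "0 \<le> e" "e \<le> 1"
    and zb: "(norm (z - b))^2 \<le> (norm (p - b))^2 + \<delta>" and \<delta>: "\<delta> \<ge> 0"
  shows "norm (z - p) \<le> sqrt (2 * (2*norm(a-b) + sqrt \<delta> + e*(2*norm p + norm b + norm (p-b) + sqrt \<delta>)) * norm (p - a)
            + (2*norm(a-b) + sqrt \<delta> + e*(2*norm p + norm b + norm (p-b) + sqrt \<delta>))^2)
          + e * (2*norm p + norm b + norm (p-b) + sqrt \<delta>)"
proof -
  define Z where "Z = 2*norm p + norm b + norm (p-b) + sqrt \<delta>"
  define \<eta> where "\<eta> = 2*norm(a-b) + sqrt \<delta> + e*Z"
  have Z0: "Z \<ge> 0" unfolding Z_def using \<delta> by simp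
  have \<eta>0: "\<eta> \<ge> 0" unfolding \<eta>_def using \<delta> e Z0 by simp
  have n1: "norm (z-b) \<le> norm (p-b) + sqrt \<delta>"
  proof -
    have "norm (z-b) = sqrt ((norm (z-b))^2)" by simp
    also have "\<dots> \<le> sqrt ((norm (p-b))^2 + \<delta>)" using zb by (rule real_sqrt_le_mono)
    also have "\<dots> \<le> sqrt ((norm (p-b))^2) + sqrt \<delta>" using \<delta> by (intro sqrt_add_le_add_sqrt) auto
    finally show ?thesis by simp
  qed
  have n2: "norm (2 *\<^sub>R p - z) \<le> Z"
  proof -
    have "norm (2 *\<^sub>R p - z) \<le> norm (2 *\<^sub>R p) + norm z" by (rule norm_triangle_ineq4)
    moreover have "norm z \<le> norm (z - b) + norm b" using norm_triangle_ineq[of "z-b" b] by simp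
    ultimately show ?thesis using n1 unfolding Z_def by simp
  qed
  define z' where "z' = (1-e) *\<^sub>R z + e *\<^sub>R (2 *\<^sub>R p)"
  have z'C: "z' \<in> local_set y X i"
    unfolding local_set_def
  proof (clarify)
    fix j
    have mp: "y i j * (X$i$j \<bullet> p) \<ge> 1" using pC unfolding local_set_def by blast
    have "y i j * (X$i$j \<bullet> z') = (1-e) * (y i j * (X$i$j \<bullet> z)) + 2 * e * (y i j * (X$i$j \<bullet> p))"
      unfolding z'_def by (simp add: inner_add_right algebra_simps)
    also have "\<dots> \<ge> (1-e) * (1-e) + 2 * e * 1"
      using zm e mp by (intro add_mono mult_left_mono) auto
    finally have "(1-e) * (1-e) + 2 * e * 1 \<le> y i j * (X$i$j \<bullet> z')" .
    moreover have "(1-e) * (1-e) + 2 * e * 1 = 1 + e * e" by (simp add: algebra_simps)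
    moreover have "0 \<le> e * e" by simp
    ultimately show "1 \<le> y i j * (X$i$j \<bullet> z')" by linarith
  qed
  have d1: "norm (z' - z) \<le> e * Z"
  proof -
    have "z' - z = e *\<^sub>R (2 *\<^sub>R p - z)" unfolding z'_def by (simp add: algebra_simps)
    then have "norm (z' - z) = e * norm (2 *\<^sub>R p - z)" using e by simp
    then show ?thesis using n2 e by (simp add: mult_left_mono)
  qed
  have d2: "norm (z' - a) \<le> norm (p - a) + \<eta>"
  proof -
    have "dist z' a \<le> dist z' z + dist z a" by (rule dist_triangle)
    moreover have "dist z a \<le> dist z b + dist b a" by (rule dist_triangle)
    ultimately have "norm (z' - a) \<le> norm (z' - z) + norm (z - b) + norm (b - a)"
      unfolding dist_norm by linarith
    moreover have "norm (p - b) \<le> norm (p - a) + norm (a - b)"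
      using dist_triangle[of p b a] unfolding dist_norm .
    moreover have "norm (b - a) = norm (a - b)" by (simp add: norm_minus_commute)
    ultimately show ?thesis using d1 n1 unfolding \<eta>_def by linarith
  qed
  have d3: "(norm (z' - p))^2 \<le> (norm (z' - a))^2 - (norm (p - a))^2"
  proof -
    have ip: "inner (a - p) (z' - p) \<le> 0" using proj z'C by blast
    have "(norm (z' - a))^2 = (norm (z' - p))^2 - 2 * inner (a - p) (z' - p) + (norm (p - a))^2"
      unfolding power2_norm_eq_inner
      by (simp add: inner_diff_left inner_diff_right inner_commute algebra_simps)
    with ip show ?thesis by linarith
  qed
  have "(norm (z' - a))^2 \<le> (norm (p - a) + \<eta>)^2"
    using d2 by (intro power_mono) auto
  then have "(norm (z' - p))^2 \<le> 2 * \<eta> * norm (p - a) + \<eta>^2"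
    using d3 by (simp add: power2_sum algebra_simps)
  then have d4: "norm (z' - p) \<le> sqrt (2 * \<eta> * norm (p - a) + \<eta>^2)"
    by (rule real_le_rsqrt)
  have "norm (z - p) \<le> norm (z' - z) + norm (z' - p)"
    using dist_triangle[of z p z'] unfolding dist_norm by (simp add: norm_minus_commute)
  then have "norm (z - p) \<le> sqrt (2 * \<eta> * norm (p - a) + \<eta>^2) + e * Z" using d1 d4 by linarith
  then show ?thesis unfolding \<eta>_def Z_def .
qed

lemma pw:
  fixes y :: "'m::finite \<Rightarrow> 'n::finite \<Rightarrow> real" and X :: "real^'d^'n^'m" and c p :: "real^'d"
  assumes lam: "0 < lam" "lam < 1" and pC: "p \<in> local_set y X i"
  defines "t \<equiv> - ln lam"
  defines "b \<equiv> (1/t) *\<^sub>R c"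
  defines "z \<equiv> (1/t) *\<^sub>R local_argmin y X i lam c"
  shows "(norm (z - b))^2 \<le> (norm (p - b))^2 + 2 * real CARD('n) / t^2"
    and "\<forall>j. y i j * (X$i$j \<bullet> z) \<ge> 1 - ln (real CARD('n) + t^2 * ((norm (p - b))^2 + 1) / 2) / t"
proof -
  define N where "N = real CARD('n)"
  define D where "D = (norm (p - b))^2"
  define w where "w = local_argmin y X i lam c"
  define S where "S = (\<lambda>v. \<Sum>j\<in>UNIV. exp (- (y i j * (X $ i $ j \<bullet> v))))"
  have t0: "t > 0" unfolding t_def using lam by simp
  have lamt: "lam = exp (- t)" unfolding t_def using lam by simp
  have cb: "c = t *\<^sub>R b" unfolding b_def using t0 by simp
  have wz: "w = t *\<^sub>R z" unfolding z_def w_def using t0 by simp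
  have N1: "N \<ge> 1" unfolding N_def by simp
  have Fw: "local_loss y X i lam c w \<le> local_loss y X i lam c (t *\<^sub>R p)"
    unfolding w_def using local_argmin_min lam by blast
  have Sp: "S (t *\<^sub>R p) \<le> N * lam"
  proof -
    have "exp (- (y i j * (X $ i $ j \<bullet> (t *\<^sub>R p)))) \<le> lam" for j
    proof -
      have "y i j * (X $ i $ j \<bullet> p) \<ge> 1" using pC unfolding local_set_def by blast
      then have "t * 1 \<le> t * (y i j * (X $ i $ j \<bullet> p))" using t0 by (intro mult_left_mono) auto
      then have "- (y i j * (X $ i $ j \<bullet> (t *\<^sub>R p))) \<le> - t" by (simp add: algebra_simps)
      then show ?thesis unfolding lamt by simp
    qed
    then have "S (t *\<^sub>R p) \<le> of_nat (card (UNIV :: 'n set)) * lam"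
      unfolding S_def by (intro sum_bounded_above) auto
    then show ?thesis unfolding N_def by simp
  qed
  have Sw0: "S w \<ge> 0" unfolding S_def by (intro sum_nonneg) auto
  have np: "norm (t *\<^sub>R p - c) = t * norm (p - b)"
  proof -
    have "t *\<^sub>R p - c = t *\<^sub>R (p - b)" unfolding cb by (simp add: algebra_simps)
    then show ?thesis using t0 by simp
  qed
  have nw: "norm (w - c) = t * norm (z - b)"
  proof -
    have "w - c = t *\<^sub>R (z - b)" unfolding cb wz by (simp add: algebra_simps)
    then show ?thesis using t0 by simp
  qed
  have key: "S w + lam / 2 * t^2 * (norm (z - b))^2 \<le> N * lam + lam / 2 * t^2 * D"
  proof -
    have "S w + lam / 2 * t^2 * (norm (z - b))^2 = local_loss y X i lam c w"
      unfolding local_loss_def S_def nw by (simp add: power_mult_distrib)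
    also have "\<dots> \<le> local_loss y X i lam c (t *\<^sub>R p)" by (rule Fw)
    also have "\<dots> = S (t *\<^sub>R p) + lam / 2 * t^2 * D"
      unfolding local_loss_def S_def np D_def by (simp add: power_mult_distrib)
    also have "\<dots> \<le> N * lam + lam / 2 * t^2 * D" using Sp by simp
    finally show ?thesis .
  qed
  have pos: "lam / 2 * t^2 > 0" using lam t0 by simp
  have "lam / 2 * t^2 * (norm (z - b))^2 \<le> lam / 2 * t^2 * (D + 2 * N / t^2)"
  proof -
    have "lam / 2 * t^2 * (D + 2 * N / t^2) = N * lam + lam / 2 * t^2 * D"
      using t0 by (simp add: field_simps)
    then show ?thesis using key Sw0 by linarith
  qed
  then have "(norm (z - b))^2 \<le> D + 2 * N / t^2"
    using pos by (simp add: mult_le_cancel_left_pos)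
  then show "(norm (z - b))^2 \<le> (norm (p - b))^2 + 2 * real CARD('n) / t^2"
    unfolding D_def N_def .
  define R where "R = N + t^2 * (D + 1) / 2"
  have R1: "R \<ge> 1" unfolding R_def D_def using N1 by (simp add: add_increasing2)
  show "\<forall>j. y i j * (X$i$j \<bullet> z) \<ge> 1 - ln (real CARD('n) + t^2 * ((norm (p - b))^2 + 1) / 2) / t"
  proof
    fix j
    have "exp (- (y i j * (X $ i $ j \<bullet> w))) \<le> S w"
      unfolding S_def by (rule member_le_sum) auto
    also have "\<dots> \<le> lam * R"
    proof -
      have "lam * R = N * lam + lam / 2 * t^2 * D + lam / 2 * t^2"
        unfolding R_def by (simp add: field_simps)
      then show ?thesis using key pos
        by (smt (verit) mult_nonneg_nonneg zero_le_power2 norm_ge_zero)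
    qed
    also have "\<dots> = exp (- t + ln R)" unfolding lamt using R1 by (simp add: exp_diff exp_minus field_simps)
    finally have "- (y i j * (X $ i $ j \<bullet> w)) \<le> - t + ln R" by simp
    then have "t * (1 - ln R / t) \<le> t * (y i j * (X $ i $ j \<bullet> z))"
      unfolding wz using t0 by (simp add: algebra_simps)
    then have "1 - ln R / t \<le> y i j * (X $ i $ j \<bullet> z)" using t0 by (simp add: mult_le_cancel_left_pos)
    then show "y i j * (X$i$j \<bullet> z) \<ge> 1 - ln (real CARD('n) + t^2 * ((norm (p - b))^2 + 1) / 2) / t"
      unfolding R_def N_def D_def .
  qed
qed

definition bnd :: "real^'d \<Rightarrow> real^'d \<Rightarrow> real^'d \<Rightarrow> real \<Rightarrow> real \<Rightarrow> real" where
  "bnd a b p \<delta> e = sqrt (2 * (2*norm(a-b) + sqrt \<delta> + e*(2*norm p + norm b + norm (p-b) + sqrt \<delta>)) * norm (p - a)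
            + (2*norm(a-b) + sqrt \<delta> + e*(2*norm p + norm b + norm (p-b) + sqrt \<delta>))^2)
          + e * (2*norm p + norm b + norm (p-b) + sqrt \<delta>)"

lemma bnd_tendsto:
  assumes "(b \<longlongrightarrow> a) F" "(\<delta> \<longlongrightarrow> 0) F" "(e \<longlongrightarrow> 0) F"
  shows "((\<lambda>x. bnd a (b x) p (\<delta> x) (e x)) \<longlongrightarrow> 0) F"
proof -
  have "((\<lambda>x. bnd a (b x) p (\<delta> x) (e x)) \<longlongrightarrow> bnd a a p 0 0) F"
    unfolding bnd_def by (intro tendsto_intros assms)
  then show ?thesis by (simp add: bnd_def)
qed

lemma t_lim: "filterlim (\<lambda>x::real. - ln x) at_top (at_right 0)"
  using ln_at_0 filterlim_uminus_at_bot by blast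

lemma comp_t:
  fixes g :: "real \<Rightarrow> 'a::topological_space"
  assumes "(g \<longlongrightarrow> L) at_top"
  shows "((\<lambda>x. g (- ln x)) \<longlongrightarrow> L) (at_right 0)"
  using filterlim_compose[OF assms t_lim] .

lemma ev_lam: "\<forall>\<^sub>F lam in at_right (0::real). 0 < lam \<and> lam < 1"
proof -
  have "\<exists>b>(0::real). \<forall>y>0. y < b \<longrightarrow> (0 < y \<and> y < 1)" by (intro exI[of _ 1]) simp
  then show ?thesis using eventually_at_right[of "0::real" 1 "\<lambda>lam. 0 < lam \<and> lam < 1"] by simp
qed

lemma asym:
  fixes y :: "'m::finite \<Rightarrow> 'n::finite \<Rightarrow> real" and X :: "real^'d^'n^'m"
    and c :: "real \<Rightarrow> real^'d"
  assumes ne: "local_set y X i \<noteq> {}"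
    and lim: "((\<lambda>lam. (1 / (- ln lam)) *\<^sub>R c lam) \<longlongrightarrow> a) (at_right 0)"
  shows "((\<lambda>lam. (1 / (- ln lam)) *\<^sub>R local_argmin y X i lam (c lam)) \<longlongrightarrow> closest_point (local_set y X i) a) (at_right 0)"
proof -
  define p where "p = closest_point (local_set y X i) a"
  have pC: "p \<in> local_set y X i" unfolding p_def by (rule closest_point_in_set[OF local_set_closed ne])
  have proj: "\<forall>q\<in>local_set y X i. inner (a - p) (q - p) \<le> 0"
    unfolding p_def using closest_point_dot[OF local_set_convex local_set_closed] by blast
  define N where "N = real CARD('n)"
  have N1: "N \<ge> 1" unfolding N_def by simp
  define t where "t = (\<lambda>lam::real. - ln lam)"
  define b where "b = (\<lambda>lam. (1 / t lam) *\<^sub>R c lam)"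
  define \<delta> where "\<delta> = (\<lambda>lam. 2 * N / (t lam)^2)"
  define K where "K = (\<lambda>lam. ((norm (p - b lam))^2 + 1) / 2)"
  define e where "e = (\<lambda>lam. ln (N + (t lam)^2 * ((norm (p - b lam))^2 + 1) / 2) / t lam)"
  define z where "z = (\<lambda>lam. (1 / t lam) *\<^sub>R local_argmin y X i lam (c lam))"
  have blim: "(b \<longlongrightarrow> a) (at_right 0)" using lim unfolding b_def t_def .
  have \<delta>lim: "(\<delta> \<longlongrightarrow> 0) (at_right 0)"
  proof -
    have "((\<lambda>x::real. 2 * N / x^2) \<longlongrightarrow> 0) at_top" by real_asymp
    from comp_t[OF this] show ?thesis unfolding \<delta>_def t_def .
  qed
  have Klim: "(K \<longlongrightarrow> ((norm (p - a))^2 + 1) / 2) (at_right 0)"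
    using blim unfolding K_def by (auto intro!: tendsto_intros)
  have elim: "(e \<longlongrightarrow> 0) (at_right 0)"
  proof (rule tendsto_sandwich[of "\<lambda>_. 0"])
    show "((\<lambda>_. 0::real) \<longlongrightarrow> 0) (at_right 0)" by simp
    define h where "h = (\<lambda>lam. 2 * ln (t lam) / t lam + ln (N + K lam) * (1 / t lam))"
    show "(h \<longlongrightarrow> 0) (at_right 0)"
    proof -
      have h1: "((\<lambda>lam. 2 * ln (t lam) / t lam) \<longlongrightarrow> 0) (at_right 0)"
      proof -
        have "((\<lambda>x::real. 2 * ln x / x) \<longlongrightarrow> 0) at_top" by real_asymp
        from comp_t[OF this] show ?thesis unfolding t_def .
      qed
      have h2: "((\<lambda>lam. 1 / t lam) \<longlongrightarrow> 0) (at_right 0)"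
      proof -
        have "((\<lambda>x::real. 1 / x) \<longlongrightarrow> 0) at_top" by real_asymp
        from comp_t[OF this] show ?thesis unfolding t_def .
      qed
      have h0: "((norm (p - a))^2 + 1) / 2 > 0" by (intro divide_pos_pos add_nonneg_pos) auto
      have "N > 0" using N1 by simp
      have pos: "N + ((norm (p - a))^2 + 1) / 2 \<noteq> 0" using add_pos_pos[OF \<open>N > 0\<close> h0] by simp
      have h3: "((\<lambda>lam. ln (N + K lam)) \<longlongrightarrow> ln (N + ((norm (p - a))^2 + 1) / 2)) (at_right 0)"
        by (intro tendsto_intros Klim pos)
      have "(h \<longlongrightarrow> 0 + ln (N + ((norm (p - a))^2 + 1) / 2) * 0) (at_right 0)"
        unfolding h_def by (intro tendsto_intros h1 h2 h3)
      then show ?thesis by simp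
    qed
    have evt: "\<forall>\<^sub>F lam in at_right 0. 1 \<le> t lam"
    proof -
      show ?thesis unfolding t_def using filterlim_at_top[THEN iffD1, OF t_lim, rule_format, of 1] .
    qed
    show "\<forall>\<^sub>F lam in at_right 0. 0 \<le> e lam"
      using evt
    proof (rule eventually_mono)
      fix lam assume t1: "1 \<le> t lam"
      have "0 \<le> (t lam)^2 * ((norm (p - b lam))^2 + 1) / 2" by simp
      then have "1 \<le> N + (t lam)^2 * ((norm (p - b lam))^2 + 1) / 2" using N1 by linarith
      then show "0 \<le> e lam" unfolding e_def using t1 by simp
    qed
    show "\<forall>\<^sub>F lam in at_right 0. e lam \<le> h lam"
      using evt
    proof (rule eventually_mono)
      fix lam assume t1: "1 \<le> t lam"
      define T where "T = t lam"
      have K0: "K lam \<ge> 0" unfolding K_def by simp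
      have Kp: "T^2 * ((norm (p - b lam))^2 + 1) / 2 = T^2 * K lam" unfolding K_def T_def by simp
      have le: "N + T^2 * K lam \<le> T^2 * (N + K lam)"
      proof -
        have "N \<le> T^2 * N" using t1 N1 unfolding T_def
          by (simp add: one_le_power mult_le_cancel_right1)
        then show ?thesis by (simp add: algebra_simps)
      qed
      have "0 \<le> T^2 * K lam" using K0 by simp
      then have pos1: "0 < N + T^2 * K lam" using N1 by linarith
      have "ln (N + T^2 * K lam) \<le> ln (T^2 * (N + K lam))"
        using le pos1 by simp
      also have "\<dots> = 2 * ln T + ln (N + K lam)"
        using t1 N1 K0 unfolding T_def by (simp add: ln_mult ln_realpow)
      finally have "ln (N + T^2 * K lam) / T \<le> (2 * ln T + ln (N + K lam)) / T"
        using t1 unfolding T_def by (simp add: divide_right_mono)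
      then show "e lam \<le> h lam" unfolding e_def h_def Kp T_def[symmetric]
        by (simp add: add_divide_distrib)
    qed
  qed
  have ev: "\<forall>\<^sub>F lam in at_right 0. norm (z lam - p) \<le> bnd a (b lam) p (\<delta> lam) (e lam)"
  proof -
    have "\<forall>\<^sub>F lam in at_right 0. e lam < 1" using elim by (rule order_tendstoD) simp
    with ev_lam have "\<forall>\<^sub>F lam in at_right 0. (0 < lam \<and> lam < 1) \<and> e lam < 1" by (rule eventually_conj)
    then show ?thesis
    proof (rule eventually_mono)
      fix lam assume h: "(0 < lam \<and> lam < 1) \<and> e lam < 1"
      have t0: "t lam > 0" unfolding t_def using h by simp
      have e0: "0 \<le> e lam"
      proof -
        have "0 \<le> (t lam)^2 * ((norm (p - b lam))^2 + 1) / 2" by simp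
        then have "1 \<le> N + (t lam)^2 * ((norm (p - b lam))^2 + 1) / 2" using N1 by linarith
        then show ?thesis unfolding e_def using t0 by simp
      qed
      note P = pw[of lam p y X i "c lam", OF conjunct1[OF conjunct1[OF h]] conjunct2[OF conjunct1[OF h]] pC]
      show "norm (z lam - p) \<le> bnd a (b lam) p (\<delta> lam) (e lam)"
        unfolding bnd_def
      proof (rule det[OF pC proj])
        show "\<forall>j. y i j * (X$i$j \<bullet> z lam) \<ge> 1 - e lam"
          using P(2) unfolding z_def e_def b_def t_def N_def .
        show "0 \<le> e lam" by (rule e0)
        show "e lam \<le> 1" using h by simp
        show "(norm (z lam - b lam))^2 \<le> (norm (p - b lam))^2 + \<delta> lam"
          using P(1) unfolding z_def \<delta>_def b_def t_def N_def .
        show "\<delta> lam \<ge> 0" unfolding \<delta>_def N_def by simp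
      qed
    qed
  qed
  have "((\<lambda>lam. z lam - p) \<longlongrightarrow> 0) (at_right 0)"
    by (rule Lim_null_comparison[OF ev bnd_tendsto[OF blim \<delta>lim elim]])
  then have "(z \<longlongrightarrow> p) (at_right 0)" by (simp add: Lim_null[symmetric])
  then show ?thesis unfolding z_def p_def t_def .
qed

lemma cesaro:
  fixes x s :: "nat \<Rightarrow> real"
  assumes x0: "\<And>k. x k \<ge> 0"
    and rec: "\<And>k. k \<ge> 1 \<Longrightarrow> real (k+1) * x (k+1) \<le> real k * x k + s k"
    and s: "\<And>\<epsilon>. \<epsilon> > 0 \<Longrightarrow> \<exists>K. \<forall>k\<ge>K. s k \<le> \<epsilon>"
  shows "x \<longlonglongrightarrow> 0"
proof (rule LIMSEQ_I)
  fix r :: real assume r: "0 < r"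
  obtain K where K: "\<forall>k\<ge>K. s k \<le> r / 2" using s[of "r/2"] r by auto
  define K1 where "K1 = max K 1"
  have bound: "real n * x n \<le> real K1 * x K1 + real (n - K1) * (r / 2)" if "K1 \<le> n" for n
    using that
  proof (induction n rule: dec_induct)
    case base then show ?case by simp
  next
    case (step n)
    have "real (n+1) * x (n+1) \<le> real n * x n + s n" using rec[of n] step(1) unfolding K1_def by auto
    also have "\<dots> \<le> real K1 * x K1 + real (n - K1) * (r / 2) + r / 2"
      using step(3) K step(1) unfolding K1_def by (smt (verit) max.bounded_iff)
    also have "\<dots> = real K1 * x K1 + real (Suc n - K1) * (r / 2)"
    proof -
      have "Suc n - K1 = (n - K1) + 1" using step(1) by simp
      then show ?thesis by (simp add: field_simps)
    qed
    finally show ?case by simp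
  qed
  obtain N0 :: nat where N0: "real N0 > 2 * real K1 * x K1 / r" using reals_Archimedean2 by blast
  show "\<exists>no. \<forall>n\<ge>no. norm (x n - 0) < r"
  proof (intro exI allI impI)
    fix n assume n: "max N0 (K1 + 1) \<le> n"
    then have nK: "K1 \<le> n" and npos: "real n > 0" by auto
    have b: "real n * x n \<le> real K1 * x K1 + real (n - K1) * (r / 2)" using bound[OF nK] .
    have "real (n - K1) \<le> real n" by simp
    then have "real (n - K1) * (r / 2) \<le> real n * (r / 2)" using r by (intro mult_right_mono) auto
    moreover have "real K1 * x K1 < real n * (r / 2)"
    proof -
      have "2 * real K1 * x K1 / r < real n" using N0 n by simp
      then have "2 * real K1 * x K1 < real n * r" using r by (simp add: divide_less_eq)
      then show ?thesis by simp
    qed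
    ultimately have "real n * x n < real n * r" using b by linarith
    then have "x n < r" using npos by simp
    then show "norm (x n - 0) < r" using x0[of n] by simp
  qed
qed

lemma alpha_facts: "0 \<le> alpha k" "alpha k \<le> 1" "1 - alpha k = 1 / (real k + 1)" "alpha k = real k / (real k + 1)"
  unfolding alpha_def by (auto simp: field_simps)

locale halp =
  fixes C :: "'m::finite \<Rightarrow> (real^'d) set"
  assumes closedC: "\<And>i. closed (C i)" and convexC: "\<And>i. convex (C i)" and neI: "(\<Inter>i. C i) \<noteq> {}"
begin

definition PP :: "'m \<Rightarrow> real^'d \<Rightarrow> real^'d" where "PP i x = closest_point (C i) x"
definition TT :: "real^'d \<Rightarrow> real^'d" where "TT x = (1 / real CARD('m)) *\<^sub>R (\<Sum>i\<in>UNIV. PP i x)"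
fun aa :: "nat \<Rightarrow> real^'d" where "aa 0 = 0" | "aa (Suc k) = alpha k *\<^sub>R TT (aa k)"
definition qq :: "real^'d" where "qq = closest_point (\<Inter>i. C i) 0"

lemma neC: "C i \<noteq> {}" using neI by blast

lemma closedI: "closed (\<Inter>i. C i)" using closedC by (intro closed_INT) auto
lemma convexI: "convex (\<Inter>i. C i)" using convexC by (intro convex_INT) auto

lemma P_lip: "norm (PP i x - PP i y) \<le> norm (x - y)"
  using closest_point_lipschitz[OF convexC closedC neC, of i x y] unfolding PP_def dist_norm .

lemma T_lip: "norm (TT x - TT y) \<le> norm (x - y)"
proof -
  define M where "M = real CARD('m)"
  have M0: "M > 0" unfolding M_def by simp
  have "TT x - TT y = (1 / M) *\<^sub>R (\<Sum>i\<in>UNIV. PP i x - PP i y)"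
    unfolding TT_def M_def by (simp add: sum_subtractf scaleR_diff_right)
  then have "norm (TT x - TT y) = (1/M) * norm (\<Sum>i\<in>UNIV. PP i x - PP i y)" using M0 by simp
  also have "\<dots> \<le> (1/M) * (\<Sum>i\<in>UNIV. norm (PP i x - PP i y))"
    using M0 by (intro mult_left_mono norm_sum) auto
  also have "\<dots> \<le> (1/M) * (of_nat (card (UNIV :: 'm set)) * norm (x - y))"
    using M0 by (intro mult_left_mono sum_bounded_above P_lip) auto
  also have "\<dots> = norm (x - y)" unfolding M_def using M0 by simp
  finally show ?thesis .
qed

lemma T_fix: assumes "v \<in> (\<Inter>i. C i)" shows "TT v = v"
proof -
  have "PP i v = v" for i unfolding PP_def using assms closest_point_self by blast
  then have "(\<Sum>i\<in>UNIV. PP i v) = (\<Sum>i\<in>(UNIV::'m set). v)" by simp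
  also have "\<dots> = real CARD('m) *\<^sub>R v" by (rule sum_constant_scaleR)
  finally show ?thesis unfolding TT_def by simp
qed

lemma fix_T: assumes fx: "TT x = x" shows "x \<in> (\<Inter>i. C i)"
proof -
  obtain v where v: "v \<in> (\<Inter>i. C i)" using neI by blast
  define M where "M = real CARD('m)"
  have M0: "M > 0" unfolding M_def by simp
  define u where "u i = x - PP i x" for i
  have "(\<Sum>i\<in>UNIV. PP i x) = M *\<^sub>R TT x" unfolding TT_def M_def using M0 M_def by simp
  then have sP: "(\<Sum>i\<in>UNIV. PP i x) = M *\<^sub>R x" using fx by simp
  have su: "(\<Sum>i\<in>UNIV. u i) = 0"
  proof -
    have "(\<Sum>i\<in>UNIV. u i) = (\<Sum>i\<in>(UNIV::'m set). x) - (\<Sum>i\<in>UNIV. PP i x)"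
      unfolding u_def by (rule sum_subtractf)
    also have "(\<Sum>i\<in>(UNIV::'m set). x) = M *\<^sub>R x" unfolding M_def by (rule sum_constant_scaleR)
    finally show ?thesis using sP by simp
  qed
  have ge: "(norm (u i))^2 \<le> inner (u i) (x - v)" for i
  proof -
    have vi: "v \<in> C i" using v by blast
    have d: "inner (x - PP i x) (v - PP i x) \<le> 0"
      unfolding PP_def by (rule closest_point_dot[OF convexC closedC vi])
    have eq: "x - v = u i - (v - PP i x)" unfolding u_def by simp
    have "inner (u i) (x - v) = inner (u i) (u i - (v - PP i x))" by (simp only: eq)
    also have "\<dots> = inner (u i) (u i) - inner (u i) (v - PP i x)" by (rule inner_diff_right)
    finally have "inner (u i) (x - v) = inner (u i) (u i) - inner (u i) (v - PP i x)" .
    then show ?thesis using d unfolding u_def by (simp add: power2_norm_eq_inner)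
  qed
  have zero: "(\<Sum>i\<in>UNIV. inner (u i) (x - v)) = 0"
    using su by (simp add: inner_sum_left[symmetric])
  have "u i = 0" for i
  proof -
    have "(norm (u i))^2 \<le> (\<Sum>j\<in>UNIV. (norm (u j))^2)" by (rule member_le_sum) auto
    also have "\<dots> \<le> (\<Sum>j\<in>UNIV. inner (u j) (x - v))" by (intro sum_mono ge)
    finally have "(norm (u i))^2 \<le> 0" using zero by simp
    then show ?thesis by simp
  qed
  then have "x = PP i x" for i unfolding u_def by (metis eq_iff_diff_eq_0)
  then have "x \<in> C i" for i unfolding PP_def by (metis closest_point_in_set closedC neC)
  then show ?thesis by blast
qed

lemma q_in: "qq \<in> (\<Inter>i. C i)" unfolding qq_def by (rule closest_point_in_set[OF closedI neI])

lemma q_dot: "v \<in> (\<Inter>i. C i) \<Longrightarrow> inner (0 - qq) (v - qq) \<le> 0"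
  unfolding qq_def by (rule closest_point_dot[OF convexI closedI])

lemma a_bound: "norm (aa k - qq) \<le> norm qq"
proof (induction k)
  case 0 then show ?case by simp
next
  case (Suc k)
  define \<alpha> where "\<alpha> = alpha k"
  have a01: "0 \<le> \<alpha>" "\<alpha> \<le> 1" unfolding \<alpha>_def using alpha_facts by auto
  have "aa (Suc k) - qq = \<alpha> *\<^sub>R (TT (aa k) - qq) + (1 - \<alpha>) *\<^sub>R (0 - qq)"
    unfolding \<alpha>_def by (simp add: algebra_simps)
  then have "norm (aa (Suc k) - qq) \<le> norm (\<alpha> *\<^sub>R (TT (aa k) - qq)) + norm ((1 - \<alpha>) *\<^sub>R (0 - qq))"
    by (metis norm_triangle_ineq)
  also have "\<dots> = \<alpha> * norm (TT (aa k) - qq) + (1 - \<alpha>) * norm qq" using a01 by simp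
  also have "\<dots> \<le> \<alpha> * norm qq + (1 - \<alpha>) * norm qq"
  proof -
    have "norm (TT (aa k) - qq) = norm (TT (aa k) - TT qq)" using T_fix[OF q_in] by simp
    also have "\<dots> \<le> norm (aa k - qq)" by (rule T_lip)
    finally have "norm (TT (aa k) - qq) \<le> norm qq" using Suc.IH by linarith
    then show ?thesis using a01 by (intro add_right_mono mult_left_mono) auto
  qed
  also have "\<dots> = norm qq" by (simp add: algebra_simps)
  finally show ?case .
qed

lemma Ta_bound: "norm (TT (aa k)) \<le> 2 * norm qq"
proof -
  have "norm (TT (aa k) - qq) = norm (TT (aa k) - TT qq)" using T_fix[OF q_in] by simp
  also have "\<dots> \<le> norm (aa k - qq)" by (rule T_lip)
  finally have "norm (TT (aa k) - qq) \<le> norm qq" using a_bound[of k] by linarith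
  moreover have "norm (TT (aa k)) \<le> norm (TT (aa k) - qq) + norm qq" using norm_triangle_sub[of "TT (aa k)" qq] by simp
  ultimately show ?thesis by linarith
qed

lemma step_rec:
  assumes k: "k \<ge> 1"
  shows "real (k+1) * norm (aa (k+1) - aa (k+1-1)) \<le> real k * norm (aa k - aa (k-1)) + 2 * norm qq / real k"
proof -
  obtain m where m: "k = Suc m" using k by (cases k) auto
  define B where "B = 2 * norm qq"
  define \<alpha>1 where "\<alpha>1 = alpha (Suc m)"
  define \<alpha>0 where "\<alpha>0 = alpha m"
  have e1: "\<alpha>1 = (real m + 1) / (real m + 2)" unfolding \<alpha>1_def alpha_def by (simp add: field_simps)
  have e2: "\<alpha>1 - \<alpha>0 = 1 / ((real m + 1) * (real m + 2))" unfolding \<alpha>1_def \<alpha>0_def alpha_def by (simp add: field_simps)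
  have a1: "0 \<le> \<alpha>1" unfolding \<alpha>1_def using alpha_facts by auto
  have d0: "0 \<le> \<alpha>1 - \<alpha>0" unfolding e2 by simp
  have "aa (Suc (Suc m)) - aa (Suc m) = \<alpha>1 *\<^sub>R (TT (aa (Suc m)) - TT (aa m)) + (\<alpha>1 - \<alpha>0) *\<^sub>R TT (aa m)"
    unfolding \<alpha>1_def \<alpha>0_def by (simp add: algebra_simps)
  then have "norm (aa (Suc (Suc m)) - aa (Suc m)) \<le> norm (\<alpha>1 *\<^sub>R (TT (aa (Suc m)) - TT (aa m))) + norm ((\<alpha>1 - \<alpha>0) *\<^sub>R TT (aa m))"
    by (metis norm_triangle_ineq)
  also have "\<dots> = \<alpha>1 * norm (TT (aa (Suc m)) - TT (aa m)) + (\<alpha>1 - \<alpha>0) * norm (TT (aa m))"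
    using a1 d0 by simp
  also have "\<dots> \<le> \<alpha>1 * norm (aa (Suc m) - aa m) + (\<alpha>1 - \<alpha>0) * B"
    unfolding B_def using a1 d0 T_lip Ta_bound by (intro add_mono mult_left_mono) auto
  finally have n: "norm (aa (Suc (Suc m)) - aa (Suc m)) \<le> \<alpha>1 * norm (aa (Suc m) - aa m) + (\<alpha>1 - \<alpha>0) * B" .
  have "(real m + 2) * norm (aa (Suc (Suc m)) - aa (Suc m)) \<le> (real m + 2) * (\<alpha>1 * norm (aa (Suc m) - aa m) + (\<alpha>1 - \<alpha>0) * B)"
    using n by (intro mult_left_mono) auto
  also have "\<dots> = ((real m + 2) * \<alpha>1) * norm (aa (Suc m) - aa m) + ((real m + 2) * (\<alpha>1 - \<alpha>0)) * B"
    by (simp add: algebra_simps del: aa.simps)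
  also have "(real m + 2) * \<alpha>1 = real m + 1" unfolding e1 by (simp add: field_simps)
  also have "(real m + 2) * (\<alpha>1 - \<alpha>0) = 1 / (real m + 1)"
  proof -
    have h: "real m + 2 \<noteq> 0" by linarith
    show ?thesis unfolding e2 using h by simp
  qed
  also have "(real m + 1) * norm (aa (Suc m) - aa m) + 1 / (real m + 1) * B = (real m + 1) * norm (aa (Suc m) - aa m) + B / (real m + 1)"
    by simp
  finally show ?thesis unfolding m B_def by (simp add: add.commute)
qed

lemma resid: "(\<lambda>k. aa k - TT (aa k)) \<longlonglongrightarrow> 0"
proof -
  define B where "B = 2 * norm qq"
  have B0: "B \<ge> 0" unfolding B_def by simp
  define x where "x k = norm (aa k - aa (k - 1))" for k
  have xlim: "x \<longlonglongrightarrow> 0"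
  proof (rule cesaro)
    show "x k \<ge> 0" for k unfolding x_def by simp
    show "real (k+1) * x (k+1) \<le> real k * x k + B / real k" if "k \<ge> 1" for k
      using step_rec[OF that] unfolding x_def B_def .
    show "\<exists>K. \<forall>k\<ge>K. B / real k \<le> \<epsilon>" if e: "\<epsilon> > 0" for \<epsilon>
    proof -
      obtain K :: nat where K: "B / \<epsilon> < real K" using reals_Archimedean2 by blast
      have "B / real k \<le> \<epsilon>" if "k \<ge> K" for k
      proof -
        have kpos: "real k > 0" using K that B0 e
          by (metis divide_nonneg_pos le_less_trans not_less of_nat_0_less_iff of_nat_le_iff order.strict_trans1 less_eq_real_def gr_zeroI)
        have "B / \<epsilon> < real k" using K that by (meson le_less_trans not_le of_nat_le_iff less_le_trans)
        then show ?thesis using e kpos by (simp add: divide_le_eq field_simps)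
      qed
      then show ?thesis by blast
    qed
  qed
  have xs: "(\<lambda>k. x (Suc k)) \<longlonglongrightarrow> 0" using LIMSEQ_Suc[OF xlim] .
  have bl: "(\<lambda>k. B / real (Suc k)) \<longlonglongrightarrow> 0" using LIMSEQ_Suc[OF lim_const_over_n[of B]] .
  have "(\<lambda>k. x (Suc k) + B / real (Suc k)) \<longlonglongrightarrow> 0 + 0" by (intro tendsto_add xs bl)
  then have g: "(\<lambda>k. x (Suc k) + B / real (Suc k)) \<longlonglongrightarrow> 0" by simp
  show ?thesis
  proof (rule Lim_null_comparison[OF always_eventually g], rule allI)
    fix k
    have "aa (Suc k) - TT (aa k) = (alpha k - 1) *\<^sub>R TT (aa k)" by (simp add: algebra_simps)
    also have "alpha k - 1 = - (1 / real (Suc k))" by (simp add: alpha_def add.commute)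
    finally have e: "aa (Suc k) - TT (aa k) = - ((1 / real (Suc k)) *\<^sub>R TT (aa k))" by simp
    have n2: "norm (aa (Suc k) - TT (aa k)) \<le> B / real (Suc k)"
      unfolding e B_def using Ta_bound[of k] by (simp add: divide_right_mono)
    have "norm (aa k - TT (aa k)) \<le> norm (aa k - aa (Suc k)) + norm (aa (Suc k) - TT (aa k))"
      using norm_triangle_ineq[of "aa k - aa (Suc k)" "aa (Suc k) - TT (aa k)"] by simp
    moreover have "norm (aa k - aa (Suc k)) = x (Suc k)" unfolding x_def by (simp add: norm_minus_commute)
    ultimately show "norm (aa k - TT (aa k)) \<le> x (Suc k) + B / real (Suc k)" using n2 by linarith
  qed
qed

end

context halp
begin

lemma limsup:
  assumes e: "\<epsilon> > 0"
  shows "\<exists>K. \<forall>k\<ge>K. inner (-qq) (aa k - qq) \<le> \<epsilon>"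
proof (rule ccontr)
  assume "\<not> ?thesis"
  then have inf: "\<forall>K. \<exists>k\<ge>K. inner (-qq) (aa k - qq) > \<epsilon>" by (auto simp: not_le)
  define S where "S = {k. inner (-qq) (aa k - qq) > \<epsilon>}"
  have infS: "infinite S" unfolding S_def infinite_nat_iff_unbounded_le using inf by auto
  define \<phi> where "\<phi> = enumerate S"
  have \<phi>mono: "strict_mono \<phi>" unfolding \<phi>_def using strict_mono_enumerate[OF infS] .
  have \<phi>S: "\<phi> n \<in> S" for n unfolding \<phi>_def using enumerate_in_set[OF infS] .
  have bd: "\<forall>n. (aa \<circ> \<phi>) n \<in> cball qq (norm qq)"
    using a_bound by (simp add: dist_norm norm_minus_commute)
  obtain l \<psi> where l: "l \<in> cball qq (norm qq)" "strict_mono (\<psi> :: nat \<Rightarrow> nat)" "((aa \<circ> \<phi>) \<circ> \<psi>) \<longlonglongrightarrow> l"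
    using seq_compactE[OF compact_imp_seq_compact[OF compact_cball] bd] by blast
  define \<rho> where "\<rho> = \<phi> \<circ> \<psi>"
  have \<rho>mono: "strict_mono \<rho>" unfolding \<rho>_def by (rule strict_mono_o[OF \<phi>mono l(2)])
  have al: "(\<lambda>n. aa (\<rho> n)) \<longlonglongrightarrow> l" using l(3) unfolding \<rho>_def comp_def .
  have rl: "(\<lambda>n. aa (\<rho> n) - TT (aa (\<rho> n))) \<longlonglongrightarrow> 0"
    using LIMSEQ_subseq_LIMSEQ[OF resid \<rho>mono] unfolding comp_def .
  have Tl: "(\<lambda>n. TT (aa (\<rho> n))) \<longlonglongrightarrow> TT l"
  proof -
    have "(\<lambda>n. aa (\<rho> n) - l) \<longlonglongrightarrow> 0" using al by (simp add: Lim_null[symmetric])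
    then have n0: "(\<lambda>n. norm (aa (\<rho> n) - l)) \<longlonglongrightarrow> 0" by (simp add: tendsto_norm_zero_iff)
    have "(\<lambda>n. TT (aa (\<rho> n)) - TT l) \<longlonglongrightarrow> 0"
      by (rule Lim_null_comparison[OF always_eventually n0]) (simp add: T_lip)
    then show ?thesis by (simp add: Lim_null[symmetric])
  qed
  have "(\<lambda>n. aa (\<rho> n) - TT (aa (\<rho> n))) \<longlonglongrightarrow> l - TT l" using al Tl by (rule tendsto_diff)
  with rl have "l - TT l = 0" using LIMSEQ_unique by blast
  then have lC: "l \<in> (\<Inter>i. C i)" using fix_T by simp
  have g: "(\<lambda>n. inner (-qq) (aa (\<rho> n) - qq)) \<longlonglongrightarrow> inner (-qq) (l - qq)"
    by (intro tendsto_intros al)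
  have "\<epsilon> \<le> inner (-qq) (l - qq)"
  proof (rule LIMSEQ_le_const[OF g], intro exI allI impI)
    fix n :: nat
    have "\<rho> n \<in> S" unfolding \<rho>_def comp_def by (rule \<phi>S)
    then show "\<epsilon> \<le> inner (-qq) (aa (\<rho> n) - qq)" unfolding S_def by simp
  qed
  moreover have "inner (0 - qq) (l - qq) \<le> 0" by (rule q_dot[OF lC])
  ultimately show False using e by simp
qed

lemma conv: "aa \<longlonglongrightarrow> qq"
proof -
  define r where "r k = (norm (aa k - qq))^2" for k
  define s where "s k = 2 * inner (-qq) (aa (k+1) - qq)" for k
  have rlim: "r \<longlonglongrightarrow> 0"
  proof (rule cesaro)
    show "r k \<ge> 0" for k unfolding r_def by simp
    show "real (k+1) * r (k+1) \<le> real k * r k + s k" if "k \<ge> 1" for k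
    proof -
      define \<alpha> where "\<alpha> = alpha k"
      have a01: "0 \<le> \<alpha>" "\<alpha> \<le> 1" unfolding \<alpha>_def using alpha_facts by auto
      define XX where "XX = \<alpha> *\<^sub>R (TT (aa k) - qq)"
      define YY where "YY = (1 - \<alpha>) *\<^sub>R (- qq)"
      have sum: "aa (k+1) - qq = XX + YY" unfolding XX_def YY_def \<alpha>_def by (simp add: algebra_simps)
      have id: "(norm (XX + YY))^2 = (norm XX)^2 + 2 * inner YY (XX + YY) - (norm YY)^2"
        unfolding power2_norm_eq_inner by (simp add: inner_add_left inner_add_right inner_commute)
      have nX: "(norm XX)^2 \<le> \<alpha> * r k"
      proof -
        have "norm (TT (aa k) - qq) = norm (TT (aa k) - TT qq)" using T_fix[OF q_in] by simp
        also have "\<dots> \<le> norm (aa k - qq)" by (rule T_lip)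
        finally have t: "norm (TT (aa k) - qq) \<le> norm (aa k - qq)" .
        have "(norm XX)^2 = \<alpha>^2 * (norm (TT (aa k) - qq))^2" unfolding XX_def using a01 by (simp add: power_mult_distrib)
        also have "\<dots> \<le> \<alpha>^2 * r k" unfolding r_def using t by (intro mult_left_mono power_mono) auto
        also have "\<dots> \<le> \<alpha> * r k"
        proof -
          have "\<alpha>^2 \<le> \<alpha>" using a01 by (simp add: power2_eq_square mult_left_le)
          then show ?thesis unfolding r_def by (intro mult_right_mono) auto
        qed
        finally show ?thesis .
      qed
      have i1: "inner YY (XX + YY) = (1 - \<alpha>) * inner (-qq) (aa (k+1) - qq)"
        unfolding sum[symmetric] unfolding YY_def by (rule inner_scaleR_left)
      have iY: "2 * inner YY (XX + YY) = (1 - \<alpha>) * s k"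
        unfolding i1 s_def by (simp only: mult.left_commute)
      have r1: "r (k+1) = (norm (XX + YY))^2" unfolding r_def sum ..
      have y0: "0 \<le> (norm YY)^2" by simp
      have "r (k+1) \<le> \<alpha> * r k + (1 - \<alpha>) * s k"
        using r1 id nX iY y0 by linarith
      then have "real (k+1) * r (k+1) \<le> real (k+1) * (\<alpha> * r k + (1 - \<alpha>) * s k)"
        by (intro mult_left_mono) auto
      also have "\<dots> = (real (k+1) * \<alpha>) * r k + (real (k+1) * (1 - \<alpha>)) * s k" by (simp add: algebra_simps)
      also have "real (k+1) * \<alpha> = real k" unfolding \<alpha>_def alpha_def by (simp add: field_simps)
      also have "real (k+1) * (1 - \<alpha>) = 1" unfolding \<alpha>_def alpha_def by (simp add: field_simps)
      finally show ?thesis by simp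
    qed
    show "\<exists>K. \<forall>k\<ge>K. s k \<le> \<epsilon>" if e: "\<epsilon> > 0" for \<epsilon>
    proof -
      obtain K where K: "\<forall>k\<ge>K. inner (-qq) (aa k - qq) \<le> \<epsilon> / 2" using limsup[of "\<epsilon>/2"] e by auto
      have "s k \<le> \<epsilon>" if "k \<ge> K" for k
        using K[rule_format, of "k+1"] that unfolding s_def by simp
      then show ?thesis by blast
    qed
  qed
  have "(\<lambda>k. sqrt (r k)) \<longlonglongrightarrow> sqrt 0" by (intro tendsto_intros rlim)
  then have "(\<lambda>k. norm (aa k - qq)) \<longlonglongrightarrow> 0" unfolding r_def by simp
  then have "(\<lambda>k. aa k - qq) \<longlonglongrightarrow> 0" by (simp add: tendsto_norm_zero_iff)
  then show ?thesis by (simp add: Lim_null[symmetric])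
qed

end

lemma normalize_scale:
  fixes m :: "real^'d"
  assumes c: "c > 0"
  shows "inverse (norm (c *\<^sub>R m)) *\<^sub>R (c *\<^sub>R m) = inverse (norm m) *\<^sub>R m"
proof -
  have "norm (c *\<^sub>R m) = c * norm m" using c by simp
  then have "inverse (norm (c *\<^sub>R m)) *\<^sub>R (c *\<^sub>R m) = (inverse (c * norm m) * c) *\<^sub>R m" by simp
  also have "inverse (c * norm m) * c = inverse (norm m)" using c by (simp add: field_simps)
  finally show ?thesis .
qed

lemma main_fixed:
  fixes y :: "'m::finite \<Rightarrow> 'n::finite \<Rightarrow> real" and X :: "real^'d^'n^'m"
  assumes ne: "\<forall>i. local_set y X i \<noteq> {}" and neT: "total_set y X \<noteq> {}"
  shows "\<exists>u :: nat \<Rightarrow> real^'d.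
              (\<forall>\<^sub>F K in sequentially.
                 ((\<lambda>lam. inverse (norm (mlgd y X lam K)) *\<^sub>R mlgd y X lam K) \<longlongrightarrow> u K) (at_right 0))
              \<and> (u \<longlonglongrightarrow> inverse (norm (svm y X)) *\<^sub>R svm y X)"
proof -
  have neI: "(\<Inter>i. local_set y X i) \<noteq> {}" using neT unfolding total_set_def .
  interpret H: halp "local_set y X"
    by unfold_locales (rule local_set_closed, rule local_set_convex, rule neI)
  have ind: "((\<lambda>lam. (1 / (- ln lam)) *\<^sub>R mlgd y X lam k) \<longlongrightarrow> H.aa k) (at_right 0)" for k
  proof (induction k)
    case 0 then show ?case by simp
  next
    case (Suc k)
    have eq: "(\<lambda>lam. (1 / (- ln lam)) *\<^sub>R mlgd y X lam (Suc k)) =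
       (\<lambda>lam. alpha k *\<^sub>R ((1 / real CARD('m)) *\<^sub>R (\<Sum>i\<in>UNIV. (1 / (- ln lam)) *\<^sub>R local_argmin y X i lam (mlgd y X lam k))))"
      by (simp add: scaleR_sum_right mult.commute)
    have lim_i: "((\<lambda>lam. (1 / (- ln lam)) *\<^sub>R local_argmin y X i lam (mlgd y X lam k)) \<longlongrightarrow> H.PP i (H.aa k)) (at_right 0)" for i
      unfolding H.PP_def by (rule asym[OF ne[rule_format] Suc.IH])
    have "((\<lambda>lam. alpha k *\<^sub>R ((1 / real CARD('m)) *\<^sub>R (\<Sum>i\<in>UNIV. (1 / (- ln lam)) *\<^sub>R local_argmin y X i lam (mlgd y X lam k))))
        \<longlongrightarrow> alpha k *\<^sub>R ((1 / real CARD('m)) *\<^sub>R (\<Sum>i\<in>UNIV. H.PP i (H.aa k)))) (at_right 0)"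
      by (intro tendsto_scaleR tendsto_const tendsto_sum lim_i)
    then show ?case unfolding eq by (simp add: H.TT_def)
  qed
  have q0: "H.qq \<noteq> 0"
  proof
    assume "H.qq = 0"
    then have "0 \<in> local_set y X undefined" using H.q_in by auto
    then show False unfolding local_set_def by simp
  qed
  have svm_eq: "svm y X = H.qq"
    unfolding svm_def
  proof (rule the_equality)
    show "H.qq \<in> total_set y X \<and> (\<forall>v\<in>total_set y X. norm H.qq \<le> norm v)"
      unfolding total_set_def H.qq_def
      using closest_point_in_set[OF H.closedI neI] closest_point_le[OF H.closedI, of _ 0]
      by (simp add: dist_norm)
    fix w assume w: "w \<in> total_set y X \<and> (\<forall>v\<in>total_set y X. norm w \<le> norm v)"
    show "w = H.qq" unfolding H.qq_def
      by (rule closest_point_unique[OF H.convexI H.closedI]) (use w in \<open>auto simp: total_set_def dist_norm\<close>)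
  qed
  define u where "u K = inverse (norm (H.aa K)) *\<^sub>R H.aa K" for K
  have ulim: "u \<longlonglongrightarrow> inverse (norm (svm y X)) *\<^sub>R svm y X"
    unfolding u_def svm_eq using q0 by (intro tendsto_intros H.conv) auto
  have evK: "\<forall>\<^sub>F K in sequentially. H.aa K \<noteq> 0"
    by (rule tendsto_imp_eventually_ne[OF H.conv q0])
  have "\<forall>\<^sub>F K in sequentially.
     ((\<lambda>lam. inverse (norm (mlgd y X lam K)) *\<^sub>R mlgd y X lam K) \<longlongrightarrow> u K) (at_right 0)"
    using evK
  proof (rule eventually_mono)
    fix K assume aK: "H.aa K \<noteq> 0"
    have l1: "((\<lambda>lam. inverse (norm ((1 / (- ln lam)) *\<^sub>R mlgd y X lam K)) *\<^sub>R ((1 / (- ln lam)) *\<^sub>R mlgd y X lam K)) \<longlongrightarrow> u K) (at_right 0)"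
      unfolding u_def using aK by (intro tendsto_intros ind) auto
    show "((\<lambda>lam. inverse (norm (mlgd y X lam K)) *\<^sub>R mlgd y X lam K) \<longlongrightarrow> u K) (at_right 0)"
    proof (rule Lim_transform_eventually[OF l1])
      show "\<forall>\<^sub>F lam in at_right 0. inverse (norm ((1 / (- ln lam)) *\<^sub>R mlgd y X lam K)) *\<^sub>R ((1 / (- ln lam)) *\<^sub>R mlgd y X lam K)
            = inverse (norm (mlgd y X lam K)) *\<^sub>R mlgd y X lam K"
        using ev_lam
      proof (rule eventually_mono)
        fix lam :: real assume "0 < lam \<and> lam < 1"
        then have "1 / (- ln lam) > 0" by simp
        then show "inverse (norm ((1 / (- ln lam)) *\<^sub>R mlgd y X lam K)) *\<^sub>R ((1 / (- ln lam)) *\<^sub>R mlgd y X lam K)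
            = inverse (norm (mlgd y X lam K)) *\<^sub>R mlgd y X lam K" by (rule normalize_scale)
      qed
    qed
  qed
  with ulim show ?thesis by blast
qed

theorem theorem3:
  fixes y :: "'m::finite \<Rightarrow> 'n::finite \<Rightarrow> real"
  assumes "\<forall>i j. y i j = 1 \<or> y i j = -1"
  shows "AE X in (lborel :: (real^'d^'n^'m) measure).
           ((\<forall>i. local_set y X i \<noteq> {}) \<and> total_set y X \<noteq> {}) \<longrightarrow>
           (\<exists>u :: nat \<Rightarrow> real^'d.
              (\<forall>\<^sub>F K in sequentially.
                 ((\<lambda>lam. inverse (norm (mlgd y X lam K)) *\<^sub>R mlgd y X lam K) \<longlongrightarrow> u K) (at_right 0))
              \<and> (u \<longlonglongrightarrow> inverse (norm (svm y X)) *\<^sub>R svm y X))"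
  by (rule AE_I2) (use main_fixed in blast)

end
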